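(* Let $E=E(R/\mathfrak m)$ and for an $R$-module $N$ let $N^\circ=\mathrm{Hom}_R(N,E)$. Then: (a) if $N^\circ$ is simple-$\mathcal F$-torsion-free, then $N$ is simple-$\mathcal F$-divisible; (b) if $N^\circ$ is simple-$\mathcal F$-divisible, then $N$ is simple-$\mathcal F$-torsion-free; (c) if $N$ is reflexive (the canonical map $N\to N^{\circ\circ}$ is an isomorphism), then the converses of (a) and (b) also hold.
   Context: Throughout, $R$ is a commutative Noetherian local ring with maximal ideal $\mathfrak m$, and $E(R/\mathfrak m)$ is the injective hull of $R/\mathfrak m$. $\mathcal F$ is a Gabriel topology on $R$: a nonempty set of ideals of $R$ such that (1) if $\mathfrak a\in\mathcal F$ and $\mathfrak a\subseteq\mathfrak b$ then $\mathfrak b\in\mathcal F$; (2) if $\mathfrak a,\mathfrak b\in\mathcal F$ then $\mathfrak a\cap\mathfrak b\in\mathcal F$; (3) if $\mathfrak b$ is an ideal and there is $\mathfrak a\in\mathcal F$ with $(\mathfrak b:r)\in\mathcal F$ for all $r\in\mathfrak a$, then $\mathfrak b\in\mathcal F$. For an $R$-module $X$ and ideal $\mathfrak a$, $X[\mathfrak a]=\{x\in X:\mathfrak a x=0\}$. $X$ is $\mathcal F$-torsion-free if $X[\mathfrak a]=0$ for all $\mathfrak a\in\mathcal F$, and $\mathcal F$-divisible if $\mathfrak aX=X$ for all $\mathfrak a\in\mathcal F$. $M$ is simple-$\mathcal F$-torsion-free if $M\neq0$, $M$ is $\mathcal F$-torsion-free, and for every submodule $0\neq U\subsetneq M$, $M/U$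 is not $\mathcal F$-torsion-free; $N$ is simple-$\mathcal F$-divisible if $N\ne0$, $N$ is $\mathcal F$-divisible, and no submodule $0\neq V\subsetneq N$ is $\mathcal F$-divisible. *)

theory Defs
  imports Main "HOL-Library.Function_Algebras"
begin

text \<open>The ring R is the type 'r (a commutative ring with 1). An R-module is given by a
carrier set M inside an abelian group type together with a scalar multiplication sc.\<close>

definition r_ideal :: "'r::comm_ring_1 set \<Rightarrow> bool" where
  "r_ideal I \<longleftrightarrow> 0 \<in> I \<and> (\<forall>x\<in>I. \<forall>y\<in>I. x + y \<in> I) \<and> (\<forall>r x. x \<in> I \<longrightarrow> r * x \<in> I)"

definition gen_ideal :: "'r::comm_ring_1 set \<Rightarrow> 'r set" where
  "gen_ideal G = {(\<Sum>i\<in>S. c i * g i) | S c g. finite (S::nat set) \<and> g ` S \<subseteq> G}"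

definition noetherian_ring :: "'r::comm_ring_1 itself \<Rightarrow> bool" where
  "noetherian_ring _ \<longleftrightarrow> (\<forall>I::'r set. r_ideal I \<longrightarrow> (\<exists>G. finite G \<and> I = gen_ideal G))"

definition local_ring_max :: "'r::comm_ring_1 set \<Rightarrow> bool" where
  "local_ring_max m \<longleftrightarrow> r_ideal m \<and> m \<noteq> UNIV \<and>
     (\<forall>I. r_ideal I \<and> I \<noteq> UNIV \<longrightarrow> I \<subseteq> m)"

definition colon_ideal :: "'r::comm_ring_1 set \<Rightarrow> 'r \<Rightarrow> 'r set" where
  "colon_ideal b r = {x. x * r \<in> b}"

definition gabriel_topology :: "'r::comm_ring_1 set set \<Rightarrow> bool" where
  "gabriel_topology F \<longleftrightarrow> F \<noteq> {} \<and> (\<forall>a\<in>F. r_ideal a) \<and>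
     (\<forall>a b. a \<in> F \<and> r_ideal b \<and> a \<subseteq> b \<longrightarrow> b \<in> F) \<and>
     (\<forall>a\<in>F. \<forall>b\<in>F. a \<inter> b \<in> F) \<and>
     (\<forall>b. r_ideal b \<and> (\<exists>a\<in>F. \<forall>r\<in>a. colon_ideal b r \<in> F) \<longrightarrow> b \<in> F)"

definition r_module :: "'m::ab_group_add set \<Rightarrow> ('r::comm_ring_1 \<Rightarrow> 'm \<Rightarrow> 'm) \<Rightarrow> bool" where
  "r_module M sc \<longleftrightarrow> 0 \<in> M \<and> (\<forall>x\<in>M. \<forall>y\<in>M. x + y \<in> M) \<and> (\<forall>x\<in>M. - x \<in> M) \<and>
     (\<forall>r. \<forall>x\<in>M. sc r x \<in> M) \<and>
     (\<forall>r. \<forall>x\<in>M. \<forall>y\<in>M. sc r (x + y) = sc r x + sc r y) \<and>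
     (\<forall>r s. \<forall>x\<in>M. sc (r + s) x = sc r x + sc s x) \<and>
     (\<forall>r s. \<forall>x\<in>M. sc (r * s) x = sc r (sc s x)) \<and>
     (\<forall>x\<in>M. sc 1 x = x)"

definition submodule :: "'m::ab_group_add set \<Rightarrow> ('r::comm_ring_1 \<Rightarrow> 'm \<Rightarrow> 'm) \<Rightarrow> 'm set \<Rightarrow> bool" where
  "submodule M sc U \<longleftrightarrow> U \<subseteq> M \<and> 0 \<in> U \<and> (\<forall>x\<in>U. \<forall>y\<in>U. x + y \<in> U) \<and>
     (\<forall>r. \<forall>x\<in>U. sc r x \<in> U)"

definition annihilated :: "'m::ab_group_add set \<Rightarrow> ('r::comm_ring_1 \<Rightarrow> 'm \<Rightarrow> 'm) \<Rightarrow> 'r set \<Rightarrow> 'm set" where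
  "annihilated X sc a = {x\<in>X. \<forall>r\<in>a. sc r x = 0}"

definition F_torsion_free :: "'r::comm_ring_1 set set \<Rightarrow> 'm::ab_group_add set \<Rightarrow> ('r \<Rightarrow> 'm \<Rightarrow> 'm) \<Rightarrow> bool" where
  "F_torsion_free F X sc \<longleftrightarrow> (\<forall>a\<in>F. annihilated X sc a = {0})"

text \<open>The quotient module M/U is F-torsion-free: for a in F, (M/U)[a] = 0, i.e. the only
coset x + U (x in M) with a(x+U) = 0 in M/U (i.e. a x contained in U) is the zero coset U.\<close>
definition quotient_F_torsion_free ::
  "'r::comm_ring_1 set set \<Rightarrow> 'm::ab_group_add set \<Rightarrow> ('r \<Rightarrow> 'm \<Rightarrow> 'm) \<Rightarrow> 'm set \<Rightarrow> bool" where
  "quotient_F_torsion_free F M sc U \<longleftrightarrow>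
     (\<forall>a\<in>F. \<forall>x\<in>M. (\<forall>r\<in>a. sc r x \<in> U) \<longrightarrow> x \<in> U)"

definition ideal_smult :: "'r::comm_ring_1 set \<Rightarrow> 'm::ab_group_add set \<Rightarrow> ('r \<Rightarrow> 'm \<Rightarrow> 'm) \<Rightarrow> 'm set" where
  "ideal_smult a X sc = {(\<Sum>i\<in>S. sc (c i) (y i)) | S c y. finite (S::nat set) \<and> c ` S \<subseteq> a \<and> y ` S \<subseteq> X}"

definition F_divisible :: "'r::comm_ring_1 set set \<Rightarrow> 'm::ab_group_add set \<Rightarrow> ('r \<Rightarrow> 'm \<Rightarrow> 'm) \<Rightarrow> bool" where
  "F_divisible F X sc \<longleftrightarrow> (\<forall>a\<in>F. ideal_smult a X sc = X)"

definition simple_F_torsion_free :: "'r::comm_ring_1 set set \<Rightarrow> 'm::ab_group_add set \<Rightarrow> ('r \<Rightarrow> 'm \<Rightarrow> 'm) \<Rightarrow> bool" where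
  "simple_F_torsion_free F M sc \<longleftrightarrow> M \<noteq> {0} \<and> F_torsion_free F M sc \<and>
     (\<forall>U. submodule M sc U \<and> U \<noteq> {0} \<and> U \<noteq> M \<longrightarrow> \<not> quotient_F_torsion_free F M sc U)"

definition simple_F_divisible :: "'r::comm_ring_1 set set \<Rightarrow> 'm::ab_group_add set \<Rightarrow> ('r \<Rightarrow> 'm \<Rightarrow> 'm) \<Rightarrow> bool" where
  "simple_F_divisible F N sc \<longleftrightarrow> N \<noteq> {0} \<and> F_divisible F N sc \<and>
     (\<forall>V. submodule N sc V \<and> V \<noteq> {0} \<and> V \<noteq> N \<longrightarrow> \<not> F_divisible F V sc)"

text \<open>Hom_R(N, E), as extensional functions (zero outside N), with pointwise module structure.\<close>
definition hom_mod :: "'n::ab_group_add set \<Rightarrow> ('r::comm_ring_1 \<Rightarrow> 'n \<Rightarrow> 'n) \<Rightarrow>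
    'e::ab_group_add set \<Rightarrow> ('r \<Rightarrow> 'e \<Rightarrow> 'e) \<Rightarrow> ('n \<Rightarrow> 'e) set" where
  "hom_mod N scN E scE = {f. (\<forall>x\<in>N. f x \<in> E) \<and> (\<forall>x\<in>N. \<forall>y\<in>N. f (x + y) = f x + f y) \<and>
      (\<forall>r. \<forall>x\<in>N. f (scN r x) = scE r (f x)) \<and> (\<forall>x. x \<notin> N \<longrightarrow> f x = 0)}"

definition hom_sc :: "'n set \<Rightarrow> ('r \<Rightarrow> 'e \<Rightarrow> 'e) \<Rightarrow> 'r \<Rightarrow> ('n \<Rightarrow> 'e::zero) \<Rightarrow> ('n \<Rightarrow> 'e)" where
  "hom_sc N scE r f = (\<lambda>x. if x \<in> N then scE r (f x) else 0)"

text \<open>Injective module (via Baer's criterion: homomorphisms from ideals of R extend to R).\<close>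
definition injective_module :: "'e::ab_group_add set \<Rightarrow> ('r::comm_ring_1 \<Rightarrow> 'e \<Rightarrow> 'e) \<Rightarrow> bool" where
  "injective_module E sc \<longleftrightarrow> (\<forall>I h. r_ideal I \<and> (\<forall>x\<in>I. h x \<in> E) \<and>
       (\<forall>x\<in>I. \<forall>y\<in>I. h (x + y) = h x + h y) \<and> (\<forall>r. \<forall>x\<in>I. h (r * x) = sc r (h x)) \<longrightarrow>
       (\<exists>e\<in>E. \<forall>x\<in>I. h x = sc x e))"

text \<open>E is an injective hull of R/m: E is injective and is an essential extension of a copy
of R/m, namely the image of an R-linear map g : R \<rightarrow> E with kernel m.\<close>
definition injective_hull_residue :: "'r::comm_ring_1 set \<Rightarrow> 'e::ab_group_add set \<Rightarrow> ('r \<Rightarrow> 'e \<Rightarrow> 'e) \<Rightarrow> bool" where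
  "injective_hull_residue m E sc \<longleftrightarrow> r_module E sc \<and> injective_module E sc \<and>
     (\<exists>g. (\<forall>r. g r \<in> E) \<and> (\<forall>r s. g (r + s) = g r + g s) \<and> (\<forall>r s. g (r * s) = sc r (g s)) \<and>
          {r. g r = 0} = m \<and>
          (\<forall>V. submodule E sc V \<and> V \<noteq> {0} \<longrightarrow> V \<inter> range g \<noteq> {0}))"

definition reflexive_mod :: "'n::ab_group_add set \<Rightarrow> ('r::comm_ring_1 \<Rightarrow> 'n \<Rightarrow> 'n) \<Rightarrow>
    'e::ab_group_add set \<Rightarrow> ('r \<Rightarrow> 'e \<Rightarrow> 'e) \<Rightarrow> bool" where
  "reflexive_mod N scN E scE \<longleftrightarrow>
     (let D = hom_mod N scN E scE;
          ev = (\<lambda>x. if x \<in> N then (\<lambda>f. if f \<in> D then f x else 0) else 0)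
      in ev \<in> hom_mod N scN (hom_mod D (hom_sc N scE) E scE) (hom_sc D scE) \<and>
         bij_betw ev N (hom_mod D (hom_sc N scE) E scE))"

end

theory Submission
  imports Defs
begin


lemma ideal_smultI: "finite (S::nat set) \<Longrightarrow> c ` S \<subseteq> a \<Longrightarrow> y ` S \<subseteq> X \<Longrightarrow>
   (\<Sum>i\<in>S. sc (c i) (y i)) \<in> ideal_smult a X sc"
  unfolding ideal_smult_def by blast

lemma ideal_smultE: assumes "x \<in> ideal_smult a X sc"
  obtains S :: "nat set" and c y where "x = (\<Sum>i\<in>S. sc (c i) (y i))" "finite S" "c ` S \<subseteq> a" "y ` S \<subseteq> X"
  using assms unfolding ideal_smult_def by blast

lemma sum_fun_apply: "(sum F S) x = sum (\<lambda>i. F i x) S"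
  by (induction S rule: infinite_finite_induct) auto

context
  fixes M :: "'m::ab_group_add set" and sc :: "'r::comm_ring_1 \<Rightarrow> 'm \<Rightarrow> 'm"
  assumes mod: "r_module M sc"
begin

lemma m0: "0 \<in> M" and madd: "x \<in> M \<Longrightarrow> y \<in> M \<Longrightarrow> x + y \<in> M"
  and mneg: "x \<in> M \<Longrightarrow> - x \<in> M" and msc: "x \<in> M \<Longrightarrow> sc r x \<in> M"
  and msc_add: "x \<in> M \<Longrightarrow> y \<in> M \<Longrightarrow> sc r (x + y) = sc r x + sc r y"
  and madd_sc: "x \<in> M \<Longrightarrow> sc (r + s) x = sc r x + sc s x"
  and mmult: "x \<in> M \<Longrightarrow> sc (r * s) x = sc r (sc s x)"
  and mone: "x \<in> M \<Longrightarrow> sc 1 x = x"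
  using mod unfolding r_module_def by blast+

lemma msc_comm: "x \<in> M \<Longrightarrow> sc r (sc s x) = sc s (sc r x)"
  using mmult[of x r s] mmult[of x s r] by (simp add: mult.commute)

lemma mdiff: "x \<in> M \<Longrightarrow> y \<in> M \<Longrightarrow> x - y \<in> M"
  using madd mneg by (metis diff_conv_add_uminus)

lemma msc_zero_r: "x \<in> M \<Longrightarrow> sc 0 x = 0"
  using madd_sc[of x 0 0] by simp

lemma msc_zero: "sc r 0 = 0"
  using msc_add[OF m0 m0, of r] by simp

lemma msc_neg: "x \<in> M \<Longrightarrow> sc r (- x) = - sc r x"
proof -
  assume x: "x \<in> M"
  have "sc r x + sc r (- x) = 0" using msc_add[OF x mneg[OF x], of r] msc_zero by simp
  then show ?thesis by (simp add: add.commute eq_neg_iff_add_eq_0)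
qed

lemma msc_diff: "x \<in> M \<Longrightarrow> y \<in> M \<Longrightarrow> sc r (x - y) = sc r x - sc r y"
  using msc_add[OF _ mneg, of x y r] msc_neg[of y r] by simp

lemma msc_neg_r: "x \<in> M \<Longrightarrow> sc (- r) x = - sc r x"
  using madd_sc[of x r "-r"] msc_zero_r by (simp add: add.commute eq_neg_iff_add_eq_0)

lemma msc_diff_r: "x \<in> M \<Longrightarrow> sc (r - s) x = sc r x - sc s x"
  using madd_sc[of x r "-s"] msc_neg_r by simp

lemma msum_in: "(\<And>i. i \<in> S \<Longrightarrow> f i \<in> M) \<Longrightarrow> sum f S \<in> M"
  by (induction S rule: infinite_finite_induct) (auto intro: m0 madd)

lemma msc_sum_r: "x \<in> M \<Longrightarrow> sc (sum f S) x = (\<Sum>i\<in>S. sc (f i) x)"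
  by (induction S rule: infinite_finite_induct) (auto simp: msc_zero_r madd_sc)

lemma msc_sum: "(\<And>i. i \<in> S \<Longrightarrow> f i \<in> M) \<Longrightarrow> sc r (sum f S) = (\<Sum>i\<in>S. sc r (f i))"
proof (induction S rule: infinite_finite_induct)
  case (insert x F)
  then show ?case by (simp add: msc_add msum_in)
qed (auto simp: msc_zero)

lemma sub_sum: "submodule M sc U \<Longrightarrow> (\<And>i. i \<in> S \<Longrightarrow> f i \<in> U) \<Longrightarrow> sum f S \<in> U"
  unfolding submodule_def by (induction S rule: infinite_finite_induct) auto

lemma sub_neg: "submodule M sc U \<Longrightarrow> x \<in> U \<Longrightarrow> - x \<in> U"
  unfolding submodule_def using msc_neg_r[of x 1] mone by (metis subsetD)

lemma sub_diff: "submodule M sc U \<Longrightarrow> x \<in> U \<Longrightarrow> y \<in> U \<Longrightarrow> x - y \<in> U"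
  using sub_neg[of U y] unfolding submodule_def by (metis diff_conv_add_uminus)

lemma ideal_smult_sub: "submodule M sc U \<Longrightarrow> a \<subseteq> UNIV \<Longrightarrow> ideal_smult a U sc \<subseteq> U"
  unfolding ideal_smult_def
  by (auto intro!: sub_sum) (auto simp: submodule_def)

lemma ideal_smult_submodule:
  assumes "r_ideal a" "X \<subseteq> M"
  shows "submodule M sc (ideal_smult a X sc)"
proof -
  have "ideal_smult a X sc \<subseteq> M"
  proof
    fix x assume "x \<in> ideal_smult a X sc"
    then obtain S :: "nat set" and c y where x: "x = (\<Sum>i\<in>S. sc (c i) (y i))" "y ` S \<subseteq> X"
      unfolding ideal_smult_def by blast
    show "x \<in> M" unfolding x(1) using x(2) assms by (auto intro!: msum_in msc)
  qed
  moreover have "0 \<in> ideal_smult a X sc"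
    unfolding ideal_smult_def by (rule CollectI, rule exI[of _ "{}"]) auto
  moreover have "x + y \<in> ideal_smult a X sc" if xy: "x \<in> ideal_smult a X sc" "y \<in> ideal_smult a X sc" for x y
  proof -
    obtain S :: "nat set" and c z where x: "x = (\<Sum>i\<in>S. sc (c i) (z i))" "finite S" "c ` S \<subseteq> a" "z ` S \<subseteq> X"
      using xy(1) unfolding ideal_smult_def by blast
    obtain T :: "nat set" and d w where y: "y = (\<Sum>i\<in>T. sc (d i) (w i))" "finite T" "d ` T \<subseteq> a" "w ` T \<subseteq> X"
      using xy(2) unfolding ideal_smult_def by blast
    define S' where "S' = (\<lambda>i::nat. 2*i) ` S"
    define T' where "T' = (\<lambda>i::nat. 2*i+1) ` T"
    define c' where "c' i = (if even i then c (i div 2) else d (i div 2))" for i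
    define z' where "z' i = (if even i then z (i div 2) else w (i div 2))" for i
    have disj: "S' \<inter> T' = {}" unfolding S'_def T'_def by (auto, presburger)
    have i1: "inj_on (\<lambda>i::nat. 2*i) S" "inj_on (\<lambda>i::nat. 2*i+1) T" by (auto simp: inj_on_def)
    have "(\<Sum>i\<in>S'. sc (c' i) (z' i)) = x"
      unfolding S'_def x(1) by (subst sum.reindex[OF i1(1)]) (simp add: c'_def z'_def)
    moreover have "(\<Sum>i\<in>T'. sc (c' i) (z' i)) = y"
      unfolding T'_def y(1) by (subst sum.reindex[OF i1(2)]) (simp add: c'_def z'_def)
    ultimately have "x + y = (\<Sum>i\<in>S' \<union> T'. sc (c' i) (z' i))"
      using disj x(2) y(2) by (simp add: S'_def T'_def sum.union_disjoint)
    moreover have "finite (S' \<union> T')" using x(2) y(2) by (simp add: S'_def T'_def)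
    moreover have "c' ` (S' \<union> T') \<subseteq> a" "z' ` (S' \<union> T') \<subseteq> X"
      using x y by (auto simp: S'_def T'_def c'_def z'_def)
    ultimately show ?thesis using ideal_smultI[of "S' \<union> T'" c' a z' X sc] by simp
  qed
  moreover have "sc r x \<in> ideal_smult a X sc" if xy: "x \<in> ideal_smult a X sc" for x r
  proof -
    obtain S :: "nat set" and c z where x: "x = (\<Sum>i\<in>S. sc (c i) (z i))" "finite S" "c ` S \<subseteq> a" "z ` S \<subseteq> X"
      using xy(1) unfolding ideal_smult_def by blast
    have "sc r x = (\<Sum>i\<in>S. sc (r * c i) (z i))"
    proof -
      have zi: "z i \<in> M" if "i \<in> S" for i using x(4) assms(2) that by auto
      have "sc r x = (\<Sum>i\<in>S. sc r (sc (c i) (z i)))" unfolding x(1)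
        by (rule msc_sum) (simp add: zi msc)
      also have "\<dots> = (\<Sum>i\<in>S. sc (r * c i) (z i))" by (rule sum.cong) (simp_all add: zi mmult)
      finally show ?thesis .
    qed
    moreover have "(\<lambda>i. r * c i) ` S \<subseteq> a" using x(3) assms(1) unfolding r_ideal_def by auto
    ultimately show ?thesis using x ideal_smultI[of S "\<lambda>i. r * c i" a z X sc] by simp
  qed
  ultimately show ?thesis unfolding submodule_def by blast
qed

end


lemma grp1: "(d1::'a::ab_group_add) + a = d2 + b \<Longrightarrow> a - b = d2 + - d1"
  by (simp add: algebra_simps)

definition good_graph where
  "good_graph M sc E scE G \<longleftrightarrow> G \<subseteq> M \<times> E \<and> single_valued G \<and>
     (\<forall>x e y f. (x,e)\<in>G \<longrightarrow> (y,f)\<in>G \<longrightarrow> (x+y, e+f) \<in> G) \<and>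
     (\<forall>r x e. (x,e)\<in>G \<longrightarrow> (sc r x, scE r e)\<in>G)"

lemma extend_graph:
  fixes M :: "'m::ab_group_add set" and sc :: "'r::comm_ring_1 \<Rightarrow> 'm \<Rightarrow> 'm"
    and E :: "'e::ab_group_add set" and scE :: "'r \<Rightarrow> 'e \<Rightarrow> 'e"
  assumes modM: "r_module M sc" and modE: "r_module E scE" and inj: "injective_module E scE"
    and G0: "good_graph M sc E scE G0" "G0 \<noteq> {}"
  shows "\<exists>H \<in> hom_mod M sc E scE. \<forall>x e. (x,e)\<in>G0 \<longrightarrow> H x = e"
proof -
  define A where "A = {G. good_graph M sc E scE G \<and> G0 \<subseteq> G}"
  have "\<forall>C\<in>chains A. \<exists>U\<in>A. \<forall>X\<in>C. X \<subseteq> U"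
  proof
    fix C assume C: "C \<in> chains A"
    show "\<exists>U\<in>A. \<forall>X\<in>C. X \<subseteq> U"
    proof (cases "C = {}")
      case True then show ?thesis using G0 by (auto simp: A_def)
    next
      case False
      have CA: "C \<subseteq> A" and ch: "\<And>X Y. X \<in> C \<Longrightarrow> Y \<in> C \<Longrightarrow> X \<subseteq> Y \<or> Y \<subseteq> X"
        using C unfolding chains_def chain_subset_def by blast+
      have "\<Union>C \<in> A"
        unfolding A_def good_graph_def
      proof (intro CollectI conjI allI impI)
        show "\<Union>C \<subseteq> M \<times> E" using CA by (auto simp: A_def good_graph_def)
        show "G0 \<subseteq> \<Union>C" using CA False by (auto simp: A_def)
        show "single_valued (\<Union>C)" unfolding single_valued_def
        proof (intro allI impI)
          fix x y z assume "(x,y) \<in> \<Union>C" "(x,z) \<in> \<Union>C"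
          then obtain X Y where "X \<in> C" "Y \<in> C" "(x,y)\<in>X" "(x,z)\<in>Y" by blast
          moreover have "single_valued X" "single_valued Y" using \<open>X \<in> C\<close> \<open>Y \<in> C\<close> CA
            by (auto simp: A_def good_graph_def)
          ultimately show "y = z" using ch[of X Y] unfolding single_valued_def by blast
        qed
        fix x e y f assume "(x,e) \<in> \<Union>C" "(y,f) \<in> \<Union>C"
        then obtain X Y where XY: "X \<in> C" "Y \<in> C" "(x,e)\<in>X" "(y,f)\<in>Y" by blast
        show "(x+y, e+f) \<in> \<Union>C"
        proof (cases "X \<subseteq> Y")
          case True
          moreover have "good_graph M sc E scE Y" using XY CA by (auto simp: A_def)
          ultimately have "(x+y, e+f) \<in> Y" using XY unfolding good_graph_def by blast
          then show ?thesis using XY by blast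
        next
          case False
          then have "Y \<subseteq> X" using ch XY by blast
          moreover have "good_graph M sc E scE X" using XY CA by (auto simp: A_def)
          ultimately have "(x+y, e+f) \<in> X" using XY unfolding good_graph_def by blast
          then show ?thesis using XY by blast
        qed
      next
        fix r x e assume "(x,e) \<in> \<Union>C"
        then obtain X where "X \<in> C" "(x,e)\<in>X" by blast
        moreover have "good_graph M sc E scE X" using \<open>X \<in> C\<close> CA by (auto simp: A_def)
        ultimately show "(sc r x, scE r e) \<in> \<Union>C" unfolding good_graph_def by blast
      qed
      then show ?thesis by blast
    qed
  qed
  from Zorn_Lemma2[OF this] obtain Gm where Gm: "Gm \<in> A" and max: "\<And>X. X \<in> A \<Longrightarrow> Gm \<subseteq> X \<Longrightarrow> X = Gm"
    by blast
  have sub: "Gm \<subseteq> M \<times> E" and sv: "single_valued Gm"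
    and gadd: "\<And>x e y f. (x,e)\<in>Gm \<Longrightarrow> (y,f)\<in>Gm \<Longrightarrow> (x+y, e+f) \<in> Gm"
    and gsc: "\<And>r x e. (x,e)\<in>Gm \<Longrightarrow> (sc r x, scE r e)\<in>Gm" and G0Gm: "G0 \<subseteq> Gm"
    using Gm unfolding A_def good_graph_def by blast+
  have g0: "(0,0) \<in> Gm"
  proof -
    obtain x e where "(x,e) \<in> G0" using G0(2) by auto
    then have xe: "(x,e) \<in> Gm" using G0Gm by auto
    then have "x \<in> M" "e \<in> E" using sub by auto
    then show ?thesis using gsc[OF xe, of 0] msc_zero_r[OF modM] msc_zero_r[OF modE] by simp
  qed
  have gneg: "(-x, -e) \<in> Gm" if "(x,e)\<in>Gm" for x e
  proof -
    have "x \<in> M" "e \<in> E" using sub that by auto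
    then show ?thesis using gsc[OF that, of "-1"] msc_neg_r[OF modM, of x 1] msc_neg_r[OF modE, of e 1]
      mone[OF modM] mone[OF modE] by simp
  qed
  define \<phi> where "\<phi> x = (THE e. (x,e) \<in> Gm)" for x
  have phi: "\<phi> x = e" if "(x,e) \<in> Gm" for x e
    unfolding \<phi>_def using that sv by (auto simp: single_valued_def)
  have dom: "Domain Gm = M"
  proof (rule ccontr)
    assume "Domain Gm \<noteq> M"
    then obtain y where y: "y \<in> M" "y \<notin> Domain Gm" using sub by auto
    define I where "I = {r. sc r y \<in> Domain Gm}"
    define k where "k r = \<phi> (sc r y)" for r
    have kI: "(sc r y, k r) \<in> Gm" if "r \<in> I" for r
      using that phi unfolding I_def k_def by auto
    have "r_ideal I" unfolding r_ideal_def
    proof (intro conjI ballI allI impI)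
      show "0 \<in> I" using g0 msc_zero_r[OF modM y(1)] unfolding I_def by force
      fix r s assume "r \<in> I" "s \<in> I"
      then show "r + s \<in> I" using gadd[OF kI kI] madd_sc[OF modM y(1)] unfolding I_def by force
    next
      fix r x assume "x \<in> I"
      then show "r * x \<in> I" using gsc[OF kI, of x r] mmult[OF modM y(1)] unfolding I_def by force
    qed
    moreover have "\<forall>x\<in>I. k x \<in> E" using kI sub by blast
    moreover have "\<forall>x\<in>I. \<forall>z\<in>I. k (x + z) = k x + k z"
      using gadd[OF kI kI] madd_sc[OF modM y(1)] phi unfolding k_def by (metis kI)
    moreover have "\<forall>r. \<forall>x\<in>I. k (r * x) = scE r (k x)"
      using gsc[OF kI] mmult[OF modM y(1)] phi unfolding k_def by metis
    ultimately obtain e where e: "e \<in> E" "\<And>r. r \<in> I \<Longrightarrow> k r = scE r e"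
      using inj unfolding injective_module_def by blast
    define G' where "G' = {(d + sc r y, a + scE r e) | d a r. (d,a)\<in>Gm}"
    have "good_graph M sc E scE G'" unfolding good_graph_def
    proof (intro conjI allI impI)
      show "G' \<subseteq> M \<times> E" using sub y e unfolding G'_def
        by (auto intro!: madd[OF modM] madd[OF modE] msc[OF modM] msc[OF modE])
      show "single_valued G'" unfolding single_valued_def
      proof (intro allI impI)
        fix x p q assume "(x,p) \<in> G'" "(x,q) \<in> G'"
        then obtain d1 a1 r1 d2 a2 r2 where h: "(d1,a1)\<in>Gm" "(d2,a2)\<in>Gm"
          "x = d1 + sc r1 y" "p = a1 + scE r1 e" "x = d2 + sc r2 y" "q = a2 + scE r2 e"
          unfolding G'_def by blast
        have "(d2 + - d1, a2 + - a1) \<in> Gm" using gadd[OF h(2) gneg[OF h(1)]] .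
        moreover have "sc (r1 - r2) y = d2 + - d1"
          using h(3,5) msc_diff_r[OF modM y(1), of r1 r2] grp1[of d1 "sc r1 y" d2 "sc r2 y"] by simp
        ultimately have "r1 - r2 \<in> I" "k (r1 - r2) = a2 + - a1"
          unfolding I_def k_def using phi by force+
        then have "scE (r1 - r2) e = a2 + - a1" using e by simp
        then have "scE r1 e - scE r2 e = a2 - a1" using msc_diff_r[OF modE e(1)] by simp
        then show "p = q" using h(4,6) by (simp add: algebra_simps)
      qed
    next
      fix x p z q assume "(x,p) \<in> G'" "(z,q) \<in> G'"
      then obtain d1 a1 r1 d2 a2 r2 where h: "(d1,a1)\<in>Gm" "(d2,a2)\<in>Gm"
          "x = d1 + sc r1 y" "p = a1 + scE r1 e" "z = d2 + sc r2 y" "q = a2 + scE r2 e"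
          unfolding G'_def by blast
      have "x + z = (d1 + d2) + sc (r1 + r2) y" "p + q = (a1 + a2) + scE (r1 + r2) e"
        using h madd_sc[OF modM y(1)] madd_sc[OF modE e(1)] by (simp_all add: algebra_simps)
      then show "(x + z, p + q) \<in> G'" unfolding G'_def using gadd[OF h(1,2)] by blast
    next
      fix s x p assume "(x,p) \<in> G'"
      then obtain d1 a1 r1 where h: "(d1,a1)\<in>Gm" "x = d1 + sc r1 y" "p = a1 + scE r1 e"
          unfolding G'_def by blast
      have "d1 \<in> M" "a1 \<in> E" using h(1) sub by auto
      then have "sc s x = sc s d1 + sc (s * r1) y" "scE s p = scE s a1 + scE (s * r1) e"
        using h msc_add[OF modM] msc_add[OF modE] msc[OF modM] msc[OF modE] y(1) e(1)
          mmult[OF modM] mmult[OF modE] by simp_all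
      then show "(sc s x, scE s p) \<in> G'" unfolding G'_def using gsc[OF h(1)] by blast
    qed
    moreover have GmG': "Gm \<subseteq> G'"
    proof
      fix p assume "p \<in> Gm"
      then obtain d a where da: "p = (d,a)" "(d,a)\<in>Gm" by (cases p) auto
      have "d = d + sc 0 y" "a = a + scE 0 e" using msc_zero_r[OF modM y(1)] msc_zero_r[OF modE e(1)] by simp_all
      then show "p \<in> G'" unfolding G'_def using da by blast
    qed
    moreover have "(y, e) \<in> G'"
    proof -
      have "y = 0 + sc 1 y" "e = 0 + scE 1 e" using mone[OF modM y(1)] mone[OF modE e(1)] by simp_all
      then show ?thesis unfolding G'_def using g0 by blast
    qed
    ultimately have "G' = Gm" using max G0Gm unfolding A_def by blast
    then show False using \<open>(y,e)\<in>G'\<close> y(2) by auto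
  qed
  define H where "H x = (if x \<in> M then \<phi> x else 0)" for x
  have HG: "(x, H x) \<in> Gm" if "x \<in> M" for x
    using dom that phi H_def by (metis Domain_iff)
  have "H \<in> hom_mod M sc E scE" unfolding hom_mod_def
  proof (intro CollectI conjI ballI allI impI)
    fix x assume x: "x \<in> M"
    show "H x \<in> E" using HG[OF x] sub by auto
    fix r show "H (sc r x) = scE r (H x)" using gsc[OF HG[OF x]] phi H_def msc[OF modM x] by metis
  next
    fix x z assume "x \<in> M" "z \<in> M"
    then show "H (x + z) = H x + H z" using gadd[OF HG HG] phi H_def madd[OF modM] by metis
  next
    fix x assume "x \<notin> M" then show "H x = 0" by (simp add: H_def)
  qed
  moreover have "H x = e" if "(x,e)\<in>G0" for x e
    using that G0Gm sub phi H_def by auto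
  ultimately show ?thesis by blast
qed


lemma hom_E: "f \<in> hom_mod N sc E scE \<Longrightarrow> x \<in> N \<Longrightarrow> f x \<in> E"
  and hom_add: "f \<in> hom_mod N sc E scE \<Longrightarrow> x \<in> N \<Longrightarrow> y \<in> N \<Longrightarrow> f (x + y) = f x + f y"
  and hom_sc: "f \<in> hom_mod N sc E scE \<Longrightarrow> x \<in> N \<Longrightarrow> f (sc r x) = scE r (f x)"
  and hom_out: "f \<in> hom_mod N sc E scE \<Longrightarrow> x \<notin> N \<Longrightarrow> f x = 0"
  unfolding hom_mod_def by blast+

lemma hom_0: "r_module N sc \<Longrightarrow> f \<in> hom_mod N sc E scE \<Longrightarrow> f 0 = 0"
  using hom_add[of f N sc E scE 0 0] m0 by force

lemma hom_sum: "r_module N sc \<Longrightarrow> f \<in> hom_mod N sc E scE \<Longrightarrow> (\<And>i. i \<in> S \<Longrightarrow> g i \<in> N) \<Longrightarrow>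
   f (sum g S) = (\<Sum>i\<in>S. f (g i))"
proof (induction S rule: infinite_finite_induct)
  case (insert x F)
  then show ?case by (simp add: hom_add msum_in)
qed (auto simp: hom_0)

lemma hom_ideal_smult: "r_module N sc \<Longrightarrow> f \<in> hom_mod N sc E scE \<Longrightarrow> V \<subseteq> N \<Longrightarrow>
   (\<forall>r\<in>a. \<forall>v\<in>V. scE r (f v) = 0) \<Longrightarrow> x \<in> ideal_smult a V sc \<Longrightarrow> f x = 0"
proof -
  assume N: "r_module N sc" and f: "f \<in> hom_mod N sc E scE" and V: "V \<subseteq> N"
    and z: "\<forall>r\<in>a. \<forall>v\<in>V. scE r (f v) = 0" and x: "x \<in> ideal_smult a V sc"
  from x obtain S :: "nat set" and c y where h: "x = (\<Sum>i\<in>S. sc (c i) (y i))" "c ` S \<subseteq> a" "y ` S \<subseteq> V"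
    by (rule ideal_smultE)
  have "f x = (\<Sum>i\<in>S. f (sc (c i) (y i)))" unfolding h(1)
    by (rule hom_sum[OF N f]) (use h V in \<open>auto intro: msc[OF N]\<close>)
  also have "\<dots> = 0"
  proof (rule sum.neutral, rule ballI)
    fix i assume i: "i \<in> S"
    then have "y i \<in> V" "c i \<in> a" using h by auto
    then show "f (sc (c i) (y i)) = 0" using hom_sc[OF f, of "y i" r] V z hom_sc[OF f] by auto
  qed
  finally show ?thesis .
qed

lemma hom_module:
  assumes N: "r_module N sc" and E: "r_module E scE"
  shows "r_module (hom_mod N sc E scE) (hom_sc N scE)"
  unfolding r_module_def
proof (intro conjI ballI allI)
  show "0 \<in> hom_mod N sc E scE" unfolding hom_mod_def using m0[OF E] msc_zero[OF E] by simp
  fix f assume f: "f \<in> hom_mod N sc E scE"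
  show "- f \<in> hom_mod N sc E scE" unfolding hom_mod_def using f
    by (auto simp: hom_E hom_add hom_sc hom_out mneg[OF E] msc_neg[OF E])
  fix r show "hom_sc N scE r f \<in> hom_mod N sc E scE" unfolding hom_mod_def hom_sc_def using f
    by (auto simp: hom_E hom_add hom_sc hom_out msc[OF E] madd[OF N] msc[OF N] msc_add[OF E]
        msc_comm[OF E])
next
  fix f g assume f: "f \<in> hom_mod N sc E scE" and g: "g \<in> hom_mod N sc E scE"
  show "f + g \<in> hom_mod N sc E scE" unfolding hom_mod_def using f g
    by (auto simp: hom_E hom_add hom_sc hom_out madd[OF E] msc_add[OF E] algebra_simps)
  fix r show "hom_sc N scE r (f + g) = hom_sc N scE r f + hom_sc N scE r g"
    unfolding hom_sc_def using f g by (auto simp: hom_E msc_add[OF E])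
next
  fix f assume f: "f \<in> hom_mod N sc E scE"
  fix r s show "hom_sc N scE (r + s) f = hom_sc N scE r f + hom_sc N scE s f"
    unfolding hom_sc_def using f by (auto simp: hom_E madd_sc[OF E])
  show "hom_sc N scE (r * s) f = hom_sc N scE r (hom_sc N scE s f)"
    unfolding hom_sc_def using f by (auto simp: hom_E mmult[OF E])
next
  fix f assume f: "f \<in> hom_mod N sc E scE"
  show "hom_sc N scE 1 f = f"
    unfolding hom_sc_def using f by (auto simp: hom_E mone[OF E] hom_out)
qed

lemma key:
  fixes M :: "'m::ab_group_add set" and sc :: "'r::comm_ring_1 \<Rightarrow> 'm \<Rightarrow> 'm"
    and E :: "'e::ab_group_add set" and scE :: "'r \<Rightarrow> 'e \<Rightarrow> 'e"
  assumes modM: "r_module M sc" and hull: "injective_hull_residue m E scE"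
    and loc: "local_ring_max m" and U: "submodule M sc U" and x: "x \<in> M" "x \<notin> U"
  shows "\<exists>f\<in>hom_mod M sc E scE. (\<forall>u\<in>U. f u = 0) \<and> f x \<noteq> 0"
proof -
  have modE: "r_module E scE" and inj: "injective_module E scE"
    using hull unfolding injective_hull_residue_def by blast+
  obtain g where g: "\<And>r. g r \<in> E" "\<And>r s. g (r + s) = g r + g s" "\<And>r s. g (r * s) = scE r (g s)"
    "{r. g r = 0} = m"
    using hull unfolding injective_hull_residue_def by blast
  have UM: "U \<subseteq> M" and U0: "0 \<in> U" and Uadd: "\<And>a b. a \<in> U \<Longrightarrow> b \<in> U \<Longrightarrow> a + b \<in> U"
    and Usc: "\<And>r a. a \<in> U \<Longrightarrow> sc r a \<in> U" using U unfolding submodule_def by blast+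
  have g0: "g 0 = 0" using g(2)[of 0 0] by simp
  define J where "J = {s. sc s x \<in> U}"
  have "r_ideal J" unfolding r_ideal_def J_def
    using U0 Uadd Usc msc_zero_r[OF modM x(1)] madd_sc[OF modM x(1)] mmult[OF modM x(1)]
    by auto
  moreover have "J \<noteq> UNIV"
  proof
    assume "J = UNIV" then have "1 \<in> J" by simp
    then show False using x mone[OF modM x(1)] unfolding J_def by simp
  qed
  ultimately have Jm: "J \<subseteq> m" using loc unfolding local_ring_max_def by blast
  define G0 where "G0 = {(u + sc r x, g r) | u r. u \<in> U}"
  have "good_graph M sc E scE G0" unfolding good_graph_def
  proof (intro conjI allI impI)
    show "G0 \<subseteq> M \<times> E" unfolding G0_def using UM g(1) x by (auto intro!: madd[OF modM] msc[OF modM])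
    show "single_valued G0" unfolding single_valued_def
    proof (intro allI impI)
      fix z p q assume "(z,p) \<in> G0" "(z,q) \<in> G0"
      then obtain u1 r1 u2 r2 where h: "u1 \<in> U" "u2 \<in> U" "z = u1 + sc r1 x" "p = g r1"
        "z = u2 + sc r2 x" "q = g r2" unfolding G0_def by blast
      have "sc (r1 - r2) x = u2 + - u1"
        using h(3,5) msc_diff_r[OF modM x(1), of r1 r2] grp1[of u1 "sc r1 x" u2 "sc r2 x"] by simp
      moreover have "u2 + - u1 \<in> U" using h(1,2) sub_neg[OF modM U] Uadd by blast
      ultimately have "r1 - r2 \<in> m" using Jm unfolding J_def by auto
      then have "g (r1 - r2) = 0" using g(4) by auto
      then show "p = q" using g(2)[of "r1 - r2" r2] h by simp
    qed
  next
    fix z p w q assume "(z,p) \<in> G0" "(w,q) \<in> G0"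
    then obtain u1 r1 u2 r2 where h: "u1 \<in> U" "u2 \<in> U" "z = u1 + sc r1 x" "p = g r1"
        "w = u2 + sc r2 x" "q = g r2" unfolding G0_def by blast
    have "z + w = (u1 + u2) + sc (r1 + r2) x" "p + q = g (r1 + r2)"
      using h madd_sc[OF modM x(1)] g(2) by (simp_all add: algebra_simps)
    then show "(z + w, p + q) \<in> G0" unfolding G0_def using Uadd[OF h(1,2)] by blast
  next
    fix s z p assume "(z,p) \<in> G0"
    then obtain u1 r1 where h: "u1 \<in> U" "z = u1 + sc r1 x" "p = g r1" unfolding G0_def by blast
    have "sc s z = sc s u1 + sc (s * r1) x" "scE s p = g (s * r1)"
      using h UM msc_add[OF modM] msc[OF modM] x(1) mmult[OF modM] g(3) by auto
    then show "(sc s z, scE s p) \<in> G0" unfolding G0_def using Usc[OF h(1)] by blast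
  qed
  moreover have "G0 \<noteq> {}" unfolding G0_def using U0 by blast
  ultimately obtain H where H: "H \<in> hom_mod M sc E scE" "\<And>z e. (z,e)\<in>G0 \<Longrightarrow> H z = e"
    using extend_graph[OF modM modE inj] by blast
  have "H u = 0" if "u \<in> U" for u
  proof -
    have "(u + sc 0 x, g 0) \<in> G0" unfolding G0_def using that by blast
    then show ?thesis using H(2) msc_zero_r[OF modM x(1)] g0 by force
  qed
  moreover have "H x \<noteq> 0"
  proof -
    have "(0 + sc 1 x, g 1) \<in> G0" unfolding G0_def using U0 by blast
    then have "H x = g 1" using H(2) mone[OF modM x(1)] by force
    moreover have "1 \<notin> m" using loc unfolding local_ring_max_def r_ideal_def by (metis UNIV_eq_I mult.right_neutral)
    ultimately show ?thesis using g(4) by auto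
  qed
  ultimately show ?thesis using H(1) by blast
qed


lemma hom_diff: "r_module N sc \<Longrightarrow> f \<in> hom_mod N sc E scE \<Longrightarrow> x \<in> N \<Longrightarrow> y \<in> N \<Longrightarrow> f (x - y) = f x - f y"
  using hom_add[of f N sc E scE "x - y" y] mdiff[of N sc x y] by (simp add: eq_diff_eq)

lemma gen_ideal_sc:
  assumes N: "r_module N sc" and U: "submodule N sc U" and x: "x \<in> N"
    and G: "\<forall>g\<in>G. sc g x \<in> U" and r: "r \<in> gen_ideal G"
  shows "sc r x \<in> U"
proof -
  obtain S :: "nat set" and c g where h: "r = (\<Sum>i\<in>S. c i * g i)" "g ` S \<subseteq> G"
    using r unfolding gen_ideal_def by blast
  have "sc r x = (\<Sum>i\<in>S. sc (c i) (sc (g i) x))"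
    unfolding h(1) msc_sum_r[OF N x] by (rule sum.cong) (simp_all add: mmult[OF N x])
  also have "\<dots> \<in> U"
    by (rule sub_sum[OF N U]) (use h G U in \<open>auto simp: submodule_def\<close>)
  finally show ?thesis .
qed

lemma gen_ideal_gen: "g \<in> G \<Longrightarrow> g \<in> gen_ideal G"
  unfolding gen_ideal_def
  by (rule CollectI, rule exI[of _ "{0::nat}"], rule exI[of _ "\<lambda>_. 1"], rule exI[of _ "\<lambda>_. g"]) simp


lemma div_perp:
  fixes N :: "'n::ab_group_add set" and scN :: "'r::comm_ring_1 \<Rightarrow> 'n \<Rightarrow> 'n"
    and E :: "'e::ab_group_add set" and scE :: "'r \<Rightarrow> 'e \<Rightarrow> 'e"
  assumes noeth: "noetherian_ring TYPE('r)" and aI: "r_ideal a"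
    and hull: "injective_hull_residue m E scE"
    and N: "r_module N scN" and U: "submodule N scN U"
    and qtf: "\<forall>x\<in>N. (\<forall>r\<in>a. scN r x \<in> U) \<longrightarrow> x \<in> U"
    and f: "f \<in> hom_mod N scN E scE" and fU: "\<forall>u\<in>U. f u = 0"
  shows "f \<in> ideal_smult a {g\<in>hom_mod N scN E scE. \<forall>u\<in>U. g u = 0} (hom_sc N scE)"
proof -
  have modE: "r_module E scE" and inj: "injective_module E scE"
    using hull unfolding injective_hull_residue_def by blast+
  obtain G where G: "finite G" "a = gen_ideal G" using noeth aI unfolding noetherian_ring_def by blast
  have GA: "G \<subseteq> a" unfolding G(2) using gen_ideal_gen by blast
  have UN: "U \<subseteq> N" and U0: "0 \<in> U" and Uadd: "\<And>p q. p \<in> U \<Longrightarrow> q \<in> U \<Longrightarrow> p + q \<in> U"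
    and Usc: "\<And>r p. p \<in> U \<Longrightarrow> scN r p \<in> U" using U unfolding submodule_def by blast+
  define P where "P = {v::'r\<Rightarrow>'n. (\<forall>g\<in>G. v g \<in> N) \<and> (\<forall>g. g \<notin> G \<longrightarrow> v g = 0)}"
  define scP where "scP r v = (\<lambda>g. scN r (v g))" for r and v :: "'r \<Rightarrow> 'n"
  have Pall: "v g \<in> N" if "v \<in> P" for v g using that m0[OF N] unfolding P_def by (cases "g \<in> G") auto
  have modP: "r_module P scP" unfolding r_module_def
  proof (intro conjI ballI allI)
    show "0 \<in> P" unfolding P_def using m0[OF N] by simp
    fix x assume x: "x \<in> P"
    show "- x \<in> P" using x unfolding P_def by (auto simp: mneg[OF N])
    fix r show "scP r x \<in> P" using x unfolding P_def scP_def by (auto simp: msc[OF N] msc_zero[OF N])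
    fix s show "scP (r + s) x = scP r x + scP s x" unfolding scP_def
      by (simp add: fun_eq_iff madd_sc[OF N Pall[OF x]])
    show "scP (r * s) x = scP r (scP s x)" unfolding scP_def
      by (simp add: fun_eq_iff mmult[OF N Pall[OF x]])
  next
    fix x y assume x: "x \<in> P" and y: "y \<in> P"
    show "x + y \<in> P" using x y unfolding P_def by (auto simp: madd[OF N])
    fix r show "scP r (x + y) = scP r x + scP r y" unfolding scP_def
      by (simp add: fun_eq_iff msc_add[OF N Pall[OF x] Pall[OF y]])
  next
    fix x assume x: "x \<in> P"
    show "scP 1 x = x" unfolding scP_def by (simp add: fun_eq_iff mone[OF N Pall[OF x]])
  qed
  define t where "t x = (\<lambda>g. if g \<in> G then scN g x else 0)" for x
  define UP where "UP = {u::'r\<Rightarrow>'n. (\<forall>g\<in>G. u g \<in> U) \<and> (\<forall>g. g \<notin> G \<longrightarrow> u g = 0)}"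
  have tP: "t x \<in> P" if "x \<in> N" for x using that unfolding t_def P_def by (auto simp: msc[OF N])
  have UPP: "UP \<subseteq> P" using UN unfolding UP_def P_def by auto
  have t_add: "t (x + y) = t x + t y" if "x \<in> N" "y \<in> N" for x y
    using that unfolding t_def by (auto simp: fun_eq_iff msc_add[OF N])
  have t_sc: "scP s (t x) = t (scN s x)" if "x \<in> N" for x s
    using that unfolding t_def scP_def by (auto simp: fun_eq_iff msc_zero[OF N] msc_comm[OF N])
  have t0: "t 0 = 0" unfolding t_def by (auto simp: fun_eq_iff msc_zero[OF N])
  define G0 where "G0 = {(t x + u, f x) | x u. x \<in> N \<and> u \<in> UP}"
  have G0I: "(t x + u, f x) \<in> G0" if "x \<in> N" "u \<in> UP" for x u
    unfolding G0_def using that by blast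
  have "good_graph P scP E scE G0" unfolding good_graph_def
  proof (intro conjI allI impI)
    show "G0 \<subseteq> P \<times> E" unfolding G0_def using tP UPP hom_E[OF f] madd[OF modP] by blast
    show "single_valued G0" unfolding single_valued_def
    proof (intro allI impI)
      fix z p q assume "(z,p) \<in> G0" "(z,q) \<in> G0"
      then obtain x1 u1 x2 u2 where h: "x1 \<in> N" "u1 \<in> UP" "x2 \<in> N" "u2 \<in> UP"
        "z = t x1 + u1" "p = f x1" "z = t x2 + u2" "q = f x2" unfolding G0_def by blast
      have "scN g (x1 - x2) \<in> U" if g: "g \<in> G" for g
      proof -
        have "(t x1 + u1) g = (t x2 + u2) g" using h(5,7) by simp
        then have "scN g x1 + u1 g = scN g x2 + u2 g" using g by (simp add: t_def)
        then have "scN g x1 - scN g x2 = u2 g + - u1 g"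
          using grp1[of "u1 g" "scN g x1" "u2 g" "scN g x2"] by (simp add: add.commute)
        moreover have "u2 g + - u1 g \<in> U" using h(2,4) g sub_neg[OF N U] Uadd unfolding UP_def by blast
        ultimately show ?thesis using msc_diff[OF N h(1,3)] by simp
      qed
      then have "\<forall>r\<in>a. scN r (x1 - x2) \<in> U"
        using gen_ideal_sc[OF N U mdiff[OF N h(1,3)]] G(2) by blast
      then have "x1 - x2 \<in> U" using qtf mdiff[OF N h(1,3)] by blast
      then have "f (x1 - x2) = 0" using fU by blast
      then show "p = q" using h hom_diff[OF N f h(1,3)] by simp
    qed
  next
    fix z p w q assume "(z,p) \<in> G0" "(w,q) \<in> G0"
    then obtain x1 u1 x2 u2 where h: "x1 \<in> N" "u1 \<in> UP" "x2 \<in> N" "u2 \<in> UP"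
        "z = t x1 + u1" "p = f x1" "w = t x2 + u2" "q = f x2" unfolding G0_def by blast
    have "z + w = t (x1 + x2) + (u1 + u2)" "p + q = f (x1 + x2)"
      using h t_add hom_add[OF f h(1,3)] by (simp_all add: algebra_simps)
    moreover have "u1 + u2 \<in> UP" using h(2,4) Uadd unfolding UP_def by auto
    ultimately show "(z + w, p + q) \<in> G0" using G0I[OF madd[OF N h(1,3)]] by simp
  next
    fix s z p assume "(z,p) \<in> G0"
    then obtain x1 u1 where h: "x1 \<in> N" "u1 \<in> UP" "z = t x1 + u1" "p = f x1"
      unfolding G0_def by blast
    have "scP s z = scP s (t x1) + scP s u1" unfolding h(3)
      by (rule msc_add[OF modP tP[OF h(1)]]) (use h(2) UPP in blast)
    then have "scP s z = t (scN s x1) + scP s u1" by (simp only: t_sc[OF h(1)])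
    moreover have "scE s p = f (scN s x1)" using h hom_sc[OF f h(1)] by simp
    moreover have "scP s u1 \<in> UP" using h(2) Usc msc_zero[OF N] unfolding UP_def scP_def by auto
    ultimately show "(scP s z, scE s p) \<in> G0" using G0I[OF msc[OF N h(1)]] by simp
  qed
  moreover have "G0 \<noteq> {}" using G0I[OF m0[OF N], of 0] unfolding UP_def using U0 by auto
  ultimately obtain H where H: "H \<in> hom_mod P scP E scE" "\<And>z e. (z,e)\<in>G0 \<Longrightarrow> H z = e"
    using extend_graph[OF modP modE inj] by blast
  have UP0: "0 \<in> UP" unfolding UP_def using U0 by auto
  have Ht: "H (t x) = f x" if "x \<in> N" for x
  proof -
    have "(t x + 0, f x) \<in> G0" using G0I that UP0 by blast
    then show ?thesis using H(2) by force
  qed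
  define e where "e g y = (\<lambda>g'. if g' = g then y else (0::'n))" for g :: 'r and y :: 'n
  define k where "k g y = (if y \<in> N then H (e g y) else 0)" for g y
  have eP: "e g y \<in> P" if "g \<in> G" "y \<in> N" for g y using that m0[OF N] unfolding e_def P_def by auto
  have kW: "k g \<in> {h\<in>hom_mod N scN E scE. \<forall>u\<in>U. h u = 0}" if g: "g \<in> G" for g
  proof -
    have "k g \<in> hom_mod N scN E scE" unfolding hom_mod_def
    proof (intro CollectI conjI ballI allI impI)
      fix x assume x: "x \<in> N"
      show "k g x \<in> E" unfolding k_def using x hom_E[OF H(1) eP[OF g x]] by simp
      fix r
      have "e g (scN r x) = scP r (e g x)" unfolding e_def scP_def by (auto simp: fun_eq_iff msc_zero[OF N])
      then show "k g (scN r x) = scE r (k g x)" unfolding k_def using x msc[OF N x] hom_sc[OF H(1) eP[OF g x]]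
        by simp
    next
      fix x y assume xy: "x \<in> N" "y \<in> N"
      have "e g (x + y) = e g x + e g y" unfolding e_def by (auto simp: fun_eq_iff)
      then show "k g (x + y) = k g x + k g y" unfolding k_def using xy madd[OF N xy] hom_add[OF H(1) eP[OF g] eP[OF g]]
        by simp
    next
      fix x assume "x \<notin> N" then show "k g x = 0" by (simp add: k_def)
    qed
    moreover have "k g u = 0" if u: "u \<in> U" for u
    proof -
      have "e g u \<in> UP" unfolding UP_def e_def using u g U0 by auto
      then have "(t 0 + e g u, f 0) \<in> G0" using G0I m0[OF N] by blast
      then have "H (e g u) = f 0" using H(2) t0 by force
      then show ?thesis using hom_0[OF N f] UN u by (auto simp: k_def)
    qed
    ultimately show ?thesis by blast
  qed
  have fsum: "f = (\<Sum>g\<in>G. hom_sc N scE g (k g))"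
  proof
    fix x
    show "f x = (\<Sum>g\<in>G. hom_sc N scE g (k g)) x"
    proof (cases "x \<in> N")
      case x: True
      have tx: "t x = (\<Sum>g\<in>G. e g (scN g x))"
        by (rule ext) (simp add: sum_fun_apply e_def t_def G(1))
      have "f x = H (\<Sum>g\<in>G. e g (scN g x))" using Ht[OF x] tx by simp
      also have "\<dots> = (\<Sum>g\<in>G. H (e g (scN g x)))"
        by (rule hom_sum[OF modP H(1)]) (use eP msc[OF N x] in blast)
      also have "\<dots> = (\<Sum>g\<in>G. scE g (k g x))"
      proof (rule sum.cong[OF refl])
        fix g assume g: "g \<in> G"
        have "H (e g (scN g x)) = k g (scN g x)" using msc[OF N x] by (simp add: k_def)
        also have "\<dots> = scE g (k g x)" using kW[OF g] hom_sc[of "k g" N scN E scE x g] x by blast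
        finally show "H (e g (scN g x)) = scE g (k g x)" .
      qed
      also have "\<dots> = (\<Sum>g\<in>G. hom_sc N scE g (k g)) x" using x by (simp add: sum_fun_apply hom_sc_def)
      finally show ?thesis .
    next
      case False
      then show ?thesis using hom_out[OF f False] by (simp add: sum_fun_apply hom_sc_def)
    qed
  qed
  obtain h where h: "bij_betw h {0..<card G} G" using ex_bij_betw_nat_finite[OF G(1)] by blast
  have "f = (\<Sum>i\<in>{0..<card G}. hom_sc N scE (h i) (k (h i)))"
    unfolding fsum using sum.reindex_bij_betw[OF h, of "\<lambda>g. hom_sc N scE g (k g)"] by simp
  moreover have "h ` {0..<card G} \<subseteq> a" using h GA by (auto simp: bij_betw_def)
  moreover have "(\<lambda>i. k (h i)) ` {0..<card G} \<subseteq> {g\<in>hom_mod N scN E scE. \<forall>u\<in>U. g u = 0}"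
    using h kW by (auto simp: bij_betw_def)
  ultimately show ?thesis using ideal_smultI[of "{0..<card G}" h a "\<lambda>i. k (h i)"] by simp
qed


lemma single_in: "r \<in> a \<Longrightarrow> y \<in> X \<Longrightarrow> sc r y \<in> ideal_smult a X sc"
  using ideal_smultI[of "{0::nat}" "\<lambda>_. r" a "\<lambda>_. y" X sc] by simp

locale setting =
  fixes m :: "'r::comm_ring_1 set" and F :: "'r set set"
    and E :: "'e::ab_group_add set" and scE :: "'r \<Rightarrow> 'e \<Rightarrow> 'e"
    and N :: "'n::ab_group_add set" and scN :: "'r \<Rightarrow> 'n \<Rightarrow> 'n"
  assumes noeth: "noetherian_ring TYPE('r)"
    and loc: "local_ring_max m"
    and gab: "gabriel_topology F"
    and hull: "injective_hull_residue m E scE"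
    and modN: "r_module N scN"
begin

abbreviation "D \<equiv> hom_mod N scN E scE"
abbreviation "scD \<equiv> hom_sc N scE"
definition "perp U = {f \<in> D. \<forall>u\<in>U. f u = 0}"

lemma modE: "r_module E scE" using hull unfolding injective_hull_residue_def by blast
lemma modD: "r_module D scD" by (rule hom_module[OF modN modE])
lemma aI: "a \<in> F \<Longrightarrow> r_ideal a" using gab unfolding gabriel_topology_def by blast

lemma sub_self: "submodule N scN N"
  unfolding submodule_def using m0[OF modN] madd[OF modN] msc[OF modN] by blast
lemma sub_zero: "submodule N scN {0}"
  unfolding submodule_def using m0[OF modN] msc_zero[OF modN] by simp

lemma perp_sub: "U \<subseteq> N \<Longrightarrow> submodule D scD (perp U)"
  unfolding submodule_def perp_def
proof (intro conjI ballI allI)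
  assume U: "U \<subseteq> N"
  show "{f \<in> D. \<forall>u\<in>U. f u = 0} \<subseteq> D" by blast
  show "0 \<in> {f \<in> D. \<forall>u\<in>U. f u = 0}" using m0[OF modD] by simp
  fix f g assume f: "f \<in> {f \<in> D. \<forall>u\<in>U. f u = 0}" and g: "g \<in> {f \<in> D. \<forall>u\<in>U. f u = 0}"
  then show "f + g \<in> {f \<in> D. \<forall>u\<in>U. f u = 0}" using madd[OF modD] by simp
next
  fix r f assume U: "U \<subseteq> N" and f: "f \<in> {f \<in> D. \<forall>u\<in>U. f u = 0}"
  then show "scD r f \<in> {f \<in> D. \<forall>u\<in>U. f u = 0}"
    using msc[OF modD] msc_zero[OF modE] by (auto simp: hom_sc_def)
qed

lemma perp_ne0: "submodule N scN U \<Longrightarrow> U \<noteq> N \<Longrightarrow> perp U \<noteq> {0}"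
proof -
  assume U: "submodule N scN U" "U \<noteq> N"
  then obtain x where x: "x \<in> N" "x \<notin> U" unfolding submodule_def by blast
  obtain f where f: "f \<in> D" "\<forall>u\<in>U. f u = 0" "f x \<noteq> 0" using key[OF modN hull loc U(1) x] by blast
  then have "f \<in> perp U" "f \<noteq> 0" unfolding perp_def by auto
  then show ?thesis by blast
qed

lemma perp_neD: "submodule N scN U \<Longrightarrow> U \<noteq> {0} \<Longrightarrow> perp U \<noteq> D"
proof -
  assume U: "submodule N scN U" "U \<noteq> {0}"
  then obtain x where x: "x \<in> U" "x \<noteq> 0" unfolding submodule_def by blast
  then have xN: "x \<in> N" using U unfolding submodule_def by blast
  obtain f where f: "f \<in> D" "f x \<noteq> 0" using key[OF modN hull loc sub_zero xN] x by blast
  then have "f \<notin> perp U" using x unfolding perp_def by auto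
  then show ?thesis using f by blast
qed

lemma N_ne0: assumes "D \<noteq> {0}" shows "N \<noteq> {0}"
proof
  assume "N = {0}"
  have "f = 0" if f: "f \<in> D" for f
  proof -
    have "f x = 0" for x using hom_0[OF modN f] hom_out[OF f] \<open>N = {0}\<close> by (cases "x = 0") auto
    then show ?thesis by (simp add: fun_eq_iff)
  qed
  then show False using assms m0[OF modD] by blast
qed

lemma D_ne0: "N \<noteq> {0} \<Longrightarrow> D \<noteq> {0}"
proof -
  assume "N \<noteq> {0}"
  then obtain x where x: "x \<in> N" "x \<noteq> 0" using m0[OF modN] by blast
  obtain f where f: "f \<in> D" "f x \<noteq> 0" using key[OF modN hull loc sub_zero x(1)] x by blast
  then show ?thesis by auto
qed

lemma eval_smult:
  assumes f: "f \<in> ideal_smult a X scD" and X: "X \<subseteq> D" and x: "x \<in> N"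
    and z: "\<forall>g\<in>X. \<forall>r\<in>a. g (scN r x) = 0"
  shows "f x = 0"
proof -
  obtain S :: "nat set" and c y where h: "f = (\<Sum>i\<in>S. scD (c i) (y i))" "c ` S \<subseteq> a" "y ` S \<subseteq> X"
    using f by (rule ideal_smultE)
  have "f x = (\<Sum>i\<in>S. scE (c i) (y i x))" unfolding h(1) using x by (simp add: sum_fun_apply hom_sc_def)
  also have "\<dots> = (\<Sum>i\<in>S. y i (scN (c i) x))"
  proof (rule sum.cong[OF refl])
    fix i assume "i \<in> S" then have "y i \<in> D" using h X by auto
    then show "scE (c i) (y i x) = y i (scN (c i) x)" using hom_sc x by metis
  qed
  also have "\<dots> = 0"
  proof (rule sum.neutral, rule ballI)
    fix i assume "i \<in> S" then have "y i \<in> X" "c i \<in> a" using h by auto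
    then show "y i (scN (c i) x) = 0" using z by blast
  qed
  finally show ?thesis .
qed

lemma refl_perp:
  assumes refl: "reflexive_mod N scN E scE" and W: "submodule D scD W" and f: "f \<in> D"
    and fz: "\<forall>x\<in>N. (\<forall>g\<in>W. g x = 0) \<longrightarrow> f x = 0"
  shows "f \<in> W"
proof (rule ccontr)
  assume nf: "f \<notin> W"
  obtain \<phi> where \<phi>: "\<phi> \<in> hom_mod D scD E scE" "\<forall>g\<in>W. \<phi> g = 0" "\<phi> f \<noteq> 0"
    using key[OF modD hull loc W f nf] by blast
  define ev where "ev = (\<lambda>x. if x \<in> N then (\<lambda>f. if f \<in> D then f x else 0) else 0)"
  have "bij_betw ev N (hom_mod D scD E scE)" using refl unfolding reflexive_mod_def ev_def Let_def by (rule conjunct2)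
  then have "\<phi> \<in> ev ` N" using \<phi>(1) bij_betw_imp_surj_on by metis
  then obtain x where x: "x \<in> N" "ev x = \<phi>" by (rule imageE) simp
  have WD: "W \<subseteq> D" using W unfolding submodule_def by blast
  have "g x = 0" if g: "g \<in> W" for g
  proof -
    have "g \<in> D" using g WD by blast
    then have "\<phi> g = g x" using x(1) x(2)[symmetric] by (simp add: ev_def)
    then show ?thesis using \<phi>(2) g by simp
  qed
  then have "f x = 0" using fz x by blast
  moreover have "f x = \<phi> f" using x(1) x(2)[symmetric] f by (simp add: ev_def)
  ultimately show False using \<phi>(3) by simp
qed

lemma divisible_perp:
  assumes U: "submodule N scN U" and qtf: "quotient_F_torsion_free F N scN U"
  shows "F_divisible F (perp U) scD"
  unfolding F_divisible_def
proof
  fix a assume a: "a \<in> F"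
  have UN: "U \<subseteq> N" using U unfolding submodule_def by blast
  show "ideal_smult a (perp U) scD = perp U"
  proof
    show "ideal_smult a (perp U) scD \<subseteq> perp U" by (rule ideal_smult_sub[OF modD perp_sub[OF UN]]) simp
    show "perp U \<subseteq> ideal_smult a (perp U) scD"
    proof
      fix f assume "f \<in> perp U"
      then have f: "f \<in> D" "\<forall>u\<in>U. f u = 0" unfolding perp_def by auto
      have "\<forall>x\<in>N. (\<forall>r\<in>a. scN r x \<in> U) \<longrightarrow> x \<in> U" using qtf a unfolding quotient_F_torsion_free_def by blast
      from div_perp[OF noeth aI[OF a] hull modN U this f(1) f(2)]
      show "f \<in> ideal_smult a (perp U) scD" unfolding perp_def .
    qed
  qed
qed

end


context setting begin

lemma part_a:
  assumes s: "simple_F_torsion_free F D scD"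
  shows "simple_F_divisible F N scN"
proof -
  have Dne: "D \<noteq> {0}" and tf: "F_torsion_free F D scD"
    and nq: "\<And>U. submodule D scD U \<Longrightarrow> U \<noteq> {0} \<Longrightarrow> U \<noteq> D \<Longrightarrow> \<not> quotient_F_torsion_free F D scD U"
    using s unfolding simple_F_torsion_free_def by blast+
  have Nne: "N \<noteq> {0}" by (rule N_ne0[OF Dne])
  have div: "F_divisible F N scN" unfolding F_divisible_def
  proof
    fix a assume a: "a \<in> F"
    have aN: "submodule N scN (ideal_smult a N scN)"
      by (rule ideal_smult_submodule[OF modN aI[OF a] subset_refl])
    show "ideal_smult a N scN = N"
    proof (rule ccontr)
      assume ne: "ideal_smult a N scN \<noteq> N"
      have "ideal_smult a N scN \<subseteq> N" using aN unfolding submodule_def by blast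
      then obtain x where x: "x \<in> N" "x \<notin> ideal_smult a N scN" using ne by blast
      obtain f where f: "f \<in> D" "\<forall>u\<in>ideal_smult a N scN. f u = 0" "f x \<noteq> 0"
        using key[OF modN hull loc aN x] by blast
      have "scD r f = 0" if r: "r \<in> a" for r
      proof -
        have "scD r f y = 0" for y
        proof (cases "y \<in> N")
          case True
          then have "scD r f y = f (scN r y)" using hom_sc[OF f(1) True] by (simp add: hom_sc_def)
          also have "\<dots> = 0" using f(2) single_in[OF r True] by blast
          finally show ?thesis .
        qed (simp add: hom_sc_def)
        then show ?thesis by (simp add: fun_eq_iff)
      qed
      then have "f \<in> annihilated D scD a" unfolding annihilated_def using f(1) by blast
      then have "f = 0" using tf a unfolding F_torsion_free_def by blast
      then show False using f(3) by simp
    qed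
  qed
  have "\<not> F_divisible F V scN" if V: "submodule N scN V" "V \<noteq> {0}" "V \<noteq> N" for V
  proof
    assume dV: "F_divisible F V scN"
    have VN: "V \<subseteq> N" using V unfolding submodule_def by blast
    have "quotient_F_torsion_free F D scD (perp V)" unfolding quotient_F_torsion_free_def
    proof (intro ballI impI)
      fix a f assume a: "a \<in> F" and f: "f \<in> D" and h: "\<forall>r\<in>a. scD r f \<in> perp V"
      have "f v = 0" if v: "v \<in> V" for v
      proof (rule hom_ideal_smult[OF modN f VN])
        show "\<forall>r\<in>a. \<forall>v\<in>V. scE r (f v) = 0"
        proof (intro ballI)
          fix r v assume "r \<in> a" "v \<in> V"
          then have "scD r f v = 0" using h unfolding perp_def by blast
          then show "scE r (f v) = 0" using \<open>v \<in> V\<close> VN by (auto simp: hom_sc_def)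
        qed
        show "v \<in> ideal_smult a V scN" using dV a v unfolding F_divisible_def by blast
      qed
      then show "f \<in> perp V" unfolding perp_def using f by blast
    qed
    then show False using nq[OF perp_sub[OF VN] perp_ne0[OF V(1,3)] perp_neD[OF V(1,2)]] by blast
  qed
  then show ?thesis unfolding simple_F_divisible_def using Nne div by blast
qed

lemma part_b:
  assumes s: "simple_F_divisible F D scD"
  shows "simple_F_torsion_free F N scN"
proof -
  have Dne: "D \<noteq> {0}" and divD: "F_divisible F D scD"
    and nd: "\<And>V. submodule D scD V \<Longrightarrow> V \<noteq> {0} \<Longrightarrow> V \<noteq> D \<Longrightarrow> \<not> F_divisible F V scD"
    using s unfolding simple_F_divisible_def by blast+
  have Nne: "N \<noteq> {0}" by (rule N_ne0[OF Dne])
  have tf: "F_torsion_free F N scN" unfolding F_torsion_free_def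
  proof
    fix a assume a: "a \<in> F"
    show "annihilated N scN a = {0}"
    proof
      show "{0} \<subseteq> annihilated N scN a" unfolding annihilated_def
        using m0[OF modN] msc_zero[OF modN] by simp
      show "annihilated N scN a \<subseteq> {0}"
      proof
        fix x assume "x \<in> annihilated N scN a"
        then have x: "x \<in> N" "\<forall>r\<in>a. scN r x = 0" unfolding annihilated_def by auto
        show "x \<in> {0}"
        proof (rule ccontr)
          assume "x \<notin> {0}"
          then obtain f where f: "f \<in> D" "f x \<noteq> 0" using key[OF modN hull loc sub_zero x(1)] by blast
          have "f \<in> ideal_smult a D scD" using divD a f(1) unfolding F_divisible_def by blast
          moreover have "\<forall>g\<in>D. \<forall>r\<in>a. g (scN r x) = 0"
          proof (intro ballI)
            fix g r assume "g \<in> D" "r \<in> a"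
            then show "g (scN r x) = 0" using x(2) hom_0[OF modN \<open>g \<in> D\<close>] by simp
          qed
          ultimately have "f x = 0" using eval_smult[OF _ subset_refl x(1)] by blast
          then show False using f(2) by simp
        qed
      qed
    qed
  qed
  have "\<not> quotient_F_torsion_free F N scN U" if U: "submodule N scN U" "U \<noteq> {0}" "U \<noteq> N" for U
  proof
    assume q: "quotient_F_torsion_free F N scN U"
    have UN: "U \<subseteq> N" using U unfolding submodule_def by blast
    show False using nd[OF perp_sub[OF UN] perp_ne0[OF U(1,3)] perp_neD[OF U(1,2)]]
      divisible_perp[OF U(1) q] by blast
  qed
  then show ?thesis unfolding simple_F_torsion_free_def using Nne tf by blast
qed

lemma Vfacts:
  assumes refl: "reflexive_mod N scN E scE" and W: "submodule D scD W" "W \<noteq> {0}" "W \<noteq> D"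
  shows "submodule N scN {x\<in>N. \<forall>g\<in>W. g x = 0}" "{x\<in>N. \<forall>g\<in>W. g x = 0} \<noteq> {0}"
    "{x\<in>N. \<forall>g\<in>W. g x = 0} \<noteq> N"
proof -
  have WD: "W \<subseteq> D" and W0: "0 \<in> W" using W unfolding submodule_def by blast+
  show "submodule N scN {x\<in>N. \<forall>g\<in>W. g x = 0}" unfolding submodule_def
  proof (intro conjI ballI allI)
    show "{x\<in>N. \<forall>g\<in>W. g x = 0} \<subseteq> N" by blast
    show "0 \<in> {x\<in>N. \<forall>g\<in>W. g x = 0}" using m0[OF modN] hom_0[OF modN] WD by blast
    fix x y assume x: "x \<in> {x\<in>N. \<forall>g\<in>W. g x = 0}" and y: "y \<in> {x\<in>N. \<forall>g\<in>W. g x = 0}"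
    have x': "x \<in> N" "\<forall>g\<in>W. g x = 0" using x by simp_all
    have y': "y \<in> N" "\<forall>g\<in>W. g y = 0" using y by simp_all
    have "g (x + y) = 0" if g: "g \<in> W" for g
    proof -
      have gD: "g \<in> D" using g WD by blast
      have "g (x + y) = g x + g y" by (rule hom_add[OF gD x'(1) y'(1)])
      then show ?thesis using bspec[OF x'(2) g] bspec[OF y'(2) g] by simp
    qed
    then show "x + y \<in> {x\<in>N. \<forall>g\<in>W. g x = 0}" using madd[OF modN x'(1) y'(1)] by simp
  next
    fix r x assume x: "x \<in> {x\<in>N. \<forall>g\<in>W. g x = 0}"
    have x': "x \<in> N" "\<forall>g\<in>W. g x = 0" using x by simp_all
    have "g (scN r x) = 0" if g: "g \<in> W" for g
    proof -
      have gD: "g \<in> D" using g WD by blast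
      have "g (scN r x) = scE r (g x)" by (rule hom_sc[OF gD x'(1)])
      then show ?thesis using bspec[OF x'(2) g] msc_zero[OF modE] by simp
    qed
    then show "scN r x \<in> {x\<in>N. \<forall>g\<in>W. g x = 0}" using msc[OF modN x'(1)] by simp
  qed
  obtain g where g: "g \<in> W" "g \<noteq> 0" using W(2) W0 by blast
  then obtain x where x: "g x \<noteq> 0" by (auto simp: fun_eq_iff)
  then have "x \<in> N" using hom_out[of g N scN E scE x] g WD by blast
  then show "{x\<in>N. \<forall>g\<in>W. g x = 0} \<noteq> N" using g x by blast
  obtain f where f: "f \<in> D" "f \<notin> W" using W(3) WD by blast
  then obtain y where y: "y \<in> N" "\<forall>g\<in>W. g y = 0" "f y \<noteq> 0" using refl_perp[OF refl W(1) f(1)] by blast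
  then have "y \<noteq> 0" using hom_0[OF modN f(1)] by auto
  then show "{x\<in>N. \<forall>g\<in>W. g x = 0} \<noteq> {0}" using y by blast
qed

lemma part_c1:
  assumes refl: "reflexive_mod N scN E scE" and s: "simple_F_divisible F N scN"
  shows "simple_F_torsion_free F D scD"
proof -
  have Nne: "N \<noteq> {0}" and divN: "F_divisible F N scN"
    and nd: "\<And>V. submodule N scN V \<Longrightarrow> V \<noteq> {0} \<Longrightarrow> V \<noteq> N \<Longrightarrow> \<not> F_divisible F V scN"
    using s unfolding simple_F_divisible_def by blast+
  have Dne: "D \<noteq> {0}" by (rule D_ne0[OF Nne])
  have tf: "F_torsion_free F D scD" unfolding F_torsion_free_def
  proof
    fix a assume a: "a \<in> F"
    show "annihilated D scD a = {0}"
    proof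
      show "{0} \<subseteq> annihilated D scD a" unfolding annihilated_def
        using m0[OF modD] msc_zero[OF modD] by simp
      show "annihilated D scD a \<subseteq> {0}"
      proof
        fix f assume "f \<in> annihilated D scD a"
        then have f: "f \<in> D" "\<forall>r\<in>a. scD r f = 0" unfolding annihilated_def by auto
        have "f x = 0" for x
        proof (cases "x \<in> N")
          case True
          show ?thesis
          proof (rule hom_ideal_smult[OF modN f(1) subset_refl])
            show "\<forall>r\<in>a. \<forall>v\<in>N. scE r (f v) = 0"
            proof (intro ballI)
              fix r v assume "r \<in> a" "v \<in> N"
              then have "scD r f v = 0" using f(2) by simp
              then show "scE r (f v) = 0" using \<open>v \<in> N\<close> by (simp add: hom_sc_def)
            qed
            show "x \<in> ideal_smult a N scN" using divN a True unfolding F_divisible_def by blast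
          qed
        qed (rule hom_out[OF f(1)])
        then show "f \<in> {0}" by (simp add: fun_eq_iff)
      qed
    qed
  qed
  have "\<not> quotient_F_torsion_free F D scD W" if W: "submodule D scD W" "W \<noteq> {0}" "W \<noteq> D" for W
  proof
    assume q: "quotient_F_torsion_free F D scD W"
    define V where "V = {x\<in>N. \<forall>g\<in>W. g x = 0}"
    have V: "submodule N scN V" "V \<noteq> {0}" "V \<noteq> N" using Vfacts[OF refl W] unfolding V_def by blast+
    have VN: "V \<subseteq> N" using V unfolding submodule_def by blast
    have "F_divisible F V scN" unfolding F_divisible_def
    proof
      fix a assume a: "a \<in> F"
      show "ideal_smult a V scN = V"
      proof
        show "ideal_smult a V scN \<subseteq> V" by (rule ideal_smult_sub[OF modN V(1)]) simp
        show "V \<subseteq> ideal_smult a V scN"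
        proof
          fix x assume xV: "x \<in> V"
          show "x \<in> ideal_smult a V scN"
          proof (rule ccontr)
            assume nx: "x \<notin> ideal_smult a V scN"
            have aV: "submodule N scN (ideal_smult a V scN)"
              by (rule ideal_smult_submodule[OF modN aI[OF a] VN])
            obtain h where h: "h \<in> D" "\<forall>u\<in>ideal_smult a V scN. h u = 0" "h x \<noteq> 0"
              using key[OF modN hull loc aV _ nx] xV VN by blast
            have "scD r h \<in> W" if r: "r \<in> a" for r
            proof (rule refl_perp[OF refl W(1) msc[OF modD h(1)]], intro ballI impI)
              fix y assume y: "y \<in> N" "\<forall>g\<in>W. g y = 0"
              then have "y \<in> V" unfolding V_def by blast
              then have "h (scN r y) = 0" using h(2) single_in[OF r] by blast
              then show "scD r h y = 0" using y(1) hom_sc[OF h(1) y(1)] by (simp add: hom_sc_def)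
            qed
            then have "h \<in> W" using q a h(1) unfolding quotient_F_torsion_free_def by blast
            then have "h x = 0" using xV unfolding V_def by blast
            then show False using h(3) by simp
          qed
        qed
      qed
    qed
    then show False using nd[OF V] by blast
  qed
  then show ?thesis unfolding simple_F_torsion_free_def using Dne tf by blast
qed

lemma part_c2:
  assumes refl: "reflexive_mod N scN E scE" and s: "simple_F_torsion_free F N scN"
  shows "simple_F_divisible F D scD"
proof -
  have Nne: "N \<noteq> {0}" and tfN: "F_torsion_free F N scN"
    and nq: "\<And>U. submodule N scN U \<Longrightarrow> U \<noteq> {0} \<Longrightarrow> U \<noteq> N \<Longrightarrow> \<not> quotient_F_torsion_free F N scN U"
    using s unfolding simple_F_torsion_free_def by blast+
  have Dne: "D \<noteq> {0}" by (rule D_ne0[OF Nne])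
  have "quotient_F_torsion_free F N scN {0}" unfolding quotient_F_torsion_free_def
  proof (intro ballI impI)
    fix a x assume a: "a \<in> F" and x: "x \<in> N" and h: "\<forall>r\<in>a. scN r x \<in> {0}"
    then have "x \<in> annihilated N scN a" unfolding annihilated_def by auto
    then show "x \<in> {0}" using tfN a unfolding F_torsion_free_def by blast
  qed
  from divisible_perp[OF sub_zero this]
  have divD: "F_divisible F D scD"
  proof -
    have "perp {0} = D" unfolding perp_def using hom_0[OF modN] by auto
    then show "F_divisible F (perp {0}) scD \<Longrightarrow> F_divisible F D scD" by simp
  qed
  have "\<not> F_divisible F W scD" if W: "submodule D scD W" "W \<noteq> {0}" "W \<noteq> D" for W
  proof
    assume dW: "F_divisible F W scD"
    have WD: "W \<subseteq> D" using W unfolding submodule_def by blast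
    define V where "V = {x\<in>N. \<forall>g\<in>W. g x = 0}"
    have V: "submodule N scN V" "V \<noteq> {0}" "V \<noteq> N" using Vfacts[OF refl W] unfolding V_def by blast+
    have "quotient_F_torsion_free F N scN V" unfolding quotient_F_torsion_free_def
    proof (intro ballI impI)
      fix a x assume a: "a \<in> F" and x: "x \<in> N" and h: "\<forall>r\<in>a. scN r x \<in> V"
      have "g x = 0" if g: "g \<in> W" for g
      proof (rule eval_smult[OF _ WD x])
        show "g \<in> ideal_smult a W scD" using dW a g unfolding F_divisible_def by blast
        show "\<forall>g\<in>W. \<forall>r\<in>a. g (scN r x) = 0" using h unfolding V_def by blast
      qed
      then show "x \<in> V" unfolding V_def using x by blast
    qed
    then show False using nq[OF V] by blast
  qed
  then show ?thesis unfolding simple_F_divisible_def using Dne divD by blast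
qed

end

theorem lemma1p7:
  fixes m :: "'r::comm_ring_1 set" and F :: "'r set set"
    and E :: "'e::ab_group_add set" and scE :: "'r \<Rightarrow> 'e \<Rightarrow> 'e"
    and N :: "'n::ab_group_add set" and scN :: "'r \<Rightarrow> 'n \<Rightarrow> 'n"
  assumes "noetherian_ring TYPE('r)"
    and "local_ring_max m"
    and "gabriel_topology F"
    and "injective_hull_residue m E scE"
    and "r_module N scN"
  shows "(simple_F_torsion_free F (hom_mod N scN E scE) (hom_sc N scE) \<longrightarrow> simple_F_divisible F N scN)
    \<and> (simple_F_divisible F (hom_mod N scN E scE) (hom_sc N scE) \<longrightarrow> simple_F_torsion_free F N scN)
    \<and> (reflexive_mod N scN E scE \<longrightarrow>
         (simple_F_divisible F N scN \<longrightarrow> simple_F_torsion_free F (hom_mod N scN E scE) (hom_sc N scE))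
       \<and> (simple_F_torsion_free F N scN \<longrightarrow> simple_F_divisible F (hom_mod N scN E scE) (hom_sc N scE)))"
proof -
  have S: "setting m F E scE N scN" unfolding setting_def using assms by blast
  show ?thesis
    apply (intro conjI impI)
       apply (rule setting.part_a[OF S]; assumption)
      apply (rule setting.part_b[OF S]; assumption)
     apply (rule setting.part_c1[OF S]; assumption)
    apply (rule setting.part_c2[OF S]; assumption)
    done
qed


end
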